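(* Let $N\ge3$ and $\sigma\in G_N$. Then $$\mathcal F\circ(\sigma\otimes\mathrm{id}_{\mathbb{Q}\langle\langle\widetilde X\rangle\rangle})=\Delta_\sigma\circ\mathcal F\qquad\text{and}\qquad\mathcal F\circ\widetilde\Delta_\sigma=(\sigma\otimes\mathrm{id}_{\mathbb{Q}\langle\langle X\rangle\rangle})\circ\mathcal F.$$
   Context: $\zeta_N=\exp(2\pi i/N)$, $\mu_N$ the complex $N$-th roots of unity, $\iota:\{1,\dots,N\}\to\mathbb{Z}/N\mathbb{Z}$ the residue-class bijection. $K\langle\langle\mathcal L\rangle\rangle$: noncommutative formal power series over $\mathcal L$. Alphabets $X=\{x_0\}\cup\{x_\zeta:\zeta\in\mu_N\}$, $\widetilde X=\{\tilde x\}\cup\{\tilde x_\alpha:\alpha\in\mathbb{Z}/N\mathbb{Z}\}$. $\mathcal F:\mathbb{Q}(\mu_N)\langle\langle\widetilde X\rangle\rangle\to\mathbb{Q}(\mu_N)\langle\langle X\rangle\rangle$ is the continuous $\mathbb{Q}(\mu_N)$-algebra isomorphism $\tilde x\mapsto x_0$, $\tilde x_\alpha\mapsto\sum_{m=1}^N\zeta_N^{-m\iota^{-1}(\alpha)}x_{\zeta_N^m}$. $G_N=\mathrm{Gal}(\mathbb{Q}(\mu_N)/\mathbb{Q})$; each $\sigma\in G_N$ has $\sigma(\zeta_N)=\zeta_N^k$ for a unique $k\in\{1,\dots,N-1\}$ coprime to $N$. $\sigma\otimes\mathrm{id}$ acts on a series by applying $\sigma$ to each coefficient: $\sum_wc_ww\mapsto\sum_w\sigma(c_w)w$.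 $\Delta_\sigma(\sum_wc_ww)=\sum_w\sigma(c_w)\delta_k(w)$ on $\mathbb{Q}(\mu_N)\langle\langle X\rangle\rangle$, where $\delta_k$ is the algebra automorphism $x_0\mapsto x_0$, $x_\zeta\mapsto x_{\zeta^k}$; $\widetilde\Delta_\sigma(\sum_wc_ww)=\sum_w\sigma(c_w)\tilde\delta_k(w)$ on $\mathbb{Q}(\mu_N)\langle\langle\widetilde X\rangle\rangle$, where $\tilde\delta_k$ is the algebra automorphism $\tilde x\mapsto\tilde x$, $\tilde x_\alpha\mapsto\tilde x_{\iota(k)\alpha}$. *)

theory Defs
  imports Complex_Main
begin

definition zetaN :: "nat \<Rightarrow> complex" where
  "zetaN N = exp (2 * of_real pi * \<i> / of_nat N)"

definition muN :: "nat \<Rightarrow> complex set" where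
  "muN N = {z. z ^ N = 1}"

definition is_subfield :: "complex set \<Rightarrow> bool" where
  "is_subfield K \<longleftrightarrow> 0 \<in> K \<and> 1 \<in> K \<and>
     (\<forall>x\<in>K. \<forall>y\<in>K. x + y \<in> K \<and> x - y \<in> K \<and> x * y \<in> K) \<and>
     (\<forall>x\<in>K. x \<noteq> 0 \<longrightarrow> inverse x \<in> K)"

definition QmuN :: "nat \<Rightarrow> complex set" where
  "QmuN N = \<Inter>{K. is_subfield K \<and> muN N \<subseteq> K}"

text \<open>The Galois group G_N: field automorphisms of Q(mu_N) (they fix Q automatically).
  An element is represented by a function on the complex numbers; only its values on
  Q(mu_N) matter.\<close>
definition GalN :: "nat \<Rightarrow> (complex \<Rightarrow> complex) set" where
  "GalN N = {\<sigma>. bij_betw \<sigma> (QmuN N) (QmuN N) \<and> \<sigma> 1 = 1 \<and>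
     (\<forall>x\<in>QmuN N. \<forall>y\<in>QmuN N. \<sigma> (x + y) = \<sigma> x + \<sigma> y \<and> \<sigma> (x * y) = \<sigma> x * \<sigma> y)}"

definition gal_exp :: "nat \<Rightarrow> (complex \<Rightarrow> complex) \<Rightarrow> nat" where
  "gal_exp N \<sigma> = (THE k. 1 \<le> k \<and> k \<le> N - 1 \<and> coprime k N \<and> \<sigma> (zetaN N) = zetaN N ^ k)"

text \<open>Letters. Alphabet X = {x_0} \<union> {x_zeta : zeta \<in> mu_N};
  alphabet X~ = {x~} \<union> {x~_alpha : alpha \<in> Z/NZ}, residue classes represented by
  their representatives in {0..<N}.\<close>
datatype xletter = X0 | XZ complex
datatype tletter = T0 | TA nat

definition Xalph :: "nat \<Rightarrow> xletter set" where
  "Xalph N = insert X0 (XZ ` muN N)"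

definition Talph :: "nat \<Rightarrow> tletter set" where
  "Talph N = insert T0 (TA ` {0..<N})"

definition serX :: "nat \<Rightarrow> (xletter list \<Rightarrow> complex) set" where
  "serX N = {f. (\<forall>w. w \<notin> lists (Xalph N) \<longrightarrow> f w = 0) \<and> (\<forall>w. f w \<in> QmuN N)}"

definition serT :: "nat \<Rightarrow> (tletter list \<Rightarrow> complex) set" where
  "serT N = {f. (\<forall>w. w \<notin> lists (Talph N) \<longrightarrow> f w = 0) \<and> (\<forall>w. f w \<in> QmuN N)}"

text \<open>The residue class bijection iota : {1..N} \<rightarrow> Z/NZ, its inverse, and
  iota(k)*alpha in Z/NZ.\<close>
definition iota :: "nat \<Rightarrow> nat \<Rightarrow> nat" where
  "iota N m = m mod N"

definition iota_inv :: "nat \<Rightarrow> nat \<Rightarrow> nat" where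
  "iota_inv N a = (if a = 0 then N else a)"

text \<open>Coefficient of the letter y in the image F(t) of the letter t:
  F(x~) = x_0, F(x~_alpha) = sum_{m=1}^N zeta_N^(-m iota^-1(alpha)) x_(zeta_N^m).\<close>
fun Fcoeff :: "nat \<Rightarrow> tletter \<Rightarrow> xletter \<Rightarrow> complex" where
  "Fcoeff N T0 X0 = 1"
| "Fcoeff N T0 (XZ z) = 0"
| "Fcoeff N (TA a) X0 = 0"
| "Fcoeff N (TA a) (XZ z) =
     (\<Sum>m\<in>{1..N}. if zetaN N ^ m = z then inverse (zetaN N ^ (m * iota_inv N a)) else 0)"

text \<open>The continuous algebra map F on series: coefficient of v in
  sum_w c_w F(w_1)...F(w_n).\<close>
definition Fmap :: "nat \<Rightarrow> (tletter list \<Rightarrow> complex) \<Rightarrow> (xletter list \<Rightarrow> complex)" where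
  "Fmap N f v = (\<Sum>w\<in>{w \<in> lists (Talph N). length w = length v}.
       f w * (\<Prod>i<length v. Fcoeff N (w ! i) (v ! i)))"

definition coeffmap :: "(complex \<Rightarrow> complex) \<Rightarrow> ('l list \<Rightarrow> complex) \<Rightarrow> ('l list \<Rightarrow> complex)" where
  "coeffmap \<sigma> f = (\<lambda>w. \<sigma> (f w))"

fun delta :: "nat \<Rightarrow> xletter \<Rightarrow> xletter" where
  "delta k X0 = X0"
| "delta k (XZ z) = XZ (z ^ k)"

fun tdelta :: "nat \<Rightarrow> nat \<Rightarrow> tletter \<Rightarrow> tletter" where
  "tdelta N k T0 = T0"
| "tdelta N k (TA a) = TA ((iota N k * a) mod N)"

text \<open>Delta_sigma(sum_w c_w w) = sum_w sigma(c_w) delta_k(w), coefficientwise.\<close>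
definition Delta :: "nat \<Rightarrow> (complex \<Rightarrow> complex) \<Rightarrow> (xletter list \<Rightarrow> complex) \<Rightarrow> (xletter list \<Rightarrow> complex)" where
  "Delta N \<sigma> f v = (\<Sum>w\<in>{w \<in> lists (Xalph N). map (delta (gal_exp N \<sigma>)) w = v}. \<sigma> (f w))"

definition tDelta :: "nat \<Rightarrow> (complex \<Rightarrow> complex) \<Rightarrow> (tletter list \<Rightarrow> complex) \<Rightarrow> (tletter list \<Rightarrow> complex)" where
  "tDelta N \<sigma> f v = (\<Sum>w\<in>{w \<in> lists (Talph N). map (tdelta N (gal_exp N \<sigma>)) w = v}. \<sigma> (f w))"

end

theory Submission imports Defs "HOL-Analysis.Complex_Transcendental" "HOL-Number_Theory.Cong"
begin

lemma zeta_pow: "zetaN N ^ j = exp(2 * of_real pi * \<i> * of_nat j / of_nat N)"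
  unfolding zetaN_def by (simp add: exp_of_nat_mult[symmetric] mult_ac)

lemma zeta_eq: "N \<ge> 1 \<Longrightarrow> zetaN N ^ a = zetaN N ^ b \<longleftrightarrow> a mod N = b mod N"
  unfolding zeta_pow by (rule complex_root_unity_eq)

lemma zeta_1: "N \<ge> 1 \<Longrightarrow> zetaN N ^ a = 1 \<longleftrightarrow> N dvd a"
  unfolding zeta_pow by (rule complex_root_unity_eq_1)

lemma muN_eq: "N \<ge> 1 \<Longrightarrow> z \<in> muN N \<longleftrightarrow> (\<exists>m<N. z = zetaN N ^ m)"
  unfolding muN_def using complex_roots_unity[of N] by (auto simp: zeta_pow)

lemma zeta_in_mu: "N \<ge> 1 \<Longrightarrow> zetaN N ^ m \<in> muN N"
  by (simp add: muN_def zeta_1 flip: power_mult)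

lemma subfield_Q: "is_subfield (QmuN N)"
  unfolding is_subfield_def QmuN_def by auto

lemma mu_Q: "muN N \<subseteq> QmuN N"
  unfolding QmuN_def by auto

lemma Q_add: "x \<in> QmuN N \<Longrightarrow> y \<in> QmuN N \<Longrightarrow> x + y \<in> QmuN N"
  using subfield_Q[of N] unfolding is_subfield_def by blast
lemma Q_mult: "x \<in> QmuN N \<Longrightarrow> y \<in> QmuN N \<Longrightarrow> x * y \<in> QmuN N"
  using subfield_Q[of N] unfolding is_subfield_def by blast
lemma Q_0: "0 \<in> QmuN N" and Q_1: "1 \<in> QmuN N"
  using subfield_Q[of N] unfolding is_subfield_def by blast+
lemma Q_inv: "x \<in> QmuN N \<Longrightarrow> inverse x \<in> QmuN N"
  using subfield_Q[of N] unfolding is_subfield_def by (cases "x = 0") auto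

lemma Q_sum: "(\<And>x. x \<in> A \<Longrightarrow> g x \<in> QmuN N) \<Longrightarrow> sum g A \<in> QmuN N"
  by (induction A rule: infinite_finite_induct) (auto simp: Q_0 Q_add)
lemma Q_prod: "(\<And>x. x \<in> A \<Longrightarrow> g x \<in> QmuN N) \<Longrightarrow> prod g A \<in> QmuN N"
  by (induction A rule: infinite_finite_induct) (auto simp: Q_1 Q_mult)
lemma Q_pow: "x \<in> QmuN N \<Longrightarrow> x ^ n \<in> QmuN N"
  by (induction n) (auto simp: Q_1 Q_mult)

lemma zeta_Q: "N \<ge> 1 \<Longrightarrow> zetaN N ^ m \<in> QmuN N"
  using zeta_in_mu mu_Q by blast

lemma Fcoeff_Q: "N \<ge> 1 \<Longrightarrow> Fcoeff N t x \<in> QmuN N"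
  by (cases t; cases x) (auto simp: Q_0 Q_1 intro!: Q_sum Q_inv zeta_Q)

context
  fixes N :: nat and \<sigma> :: "complex \<Rightarrow> complex"
  assumes N: "N \<ge> 1" and s: "\<sigma> \<in> GalN N"
begin

lemma s_add: "x \<in> QmuN N \<Longrightarrow> y \<in> QmuN N \<Longrightarrow> \<sigma> (x + y) = \<sigma> x + \<sigma> y"
  using s unfolding GalN_def by blast
lemma s_mult: "x \<in> QmuN N \<Longrightarrow> y \<in> QmuN N \<Longrightarrow> \<sigma> (x * y) = \<sigma> x * \<sigma> y"
  using s unfolding GalN_def by blast
lemma s_1: "\<sigma> 1 = 1"
  using s unfolding GalN_def by blast
lemma s_0: "\<sigma> 0 = 0"
  using s_add[OF Q_0 Q_0] by simp
lemma s_inj: "x \<in> QmuN N \<Longrightarrow> y \<in> QmuN N \<Longrightarrow> \<sigma> x = \<sigma> y \<Longrightarrow> x = y"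
  using s unfolding GalN_def bij_betw_def inj_on_def by blast
lemma s_pow: "x \<in> QmuN N \<Longrightarrow> \<sigma> (x ^ n) = \<sigma> x ^ n"
  by (induction n) (auto simp: s_1 s_mult Q_pow)
lemma s_inverse: "x \<in> QmuN N \<Longrightarrow> \<sigma> (inverse x) = inverse (\<sigma> x)"
proof (cases "x = 0")
  case True then show ?thesis by (simp add: s_0)
next
  case False
  assume x: "x \<in> QmuN N"
  have "\<sigma> x * \<sigma> (inverse x) = 1"
    using s_mult[OF x Q_inv[OF x]] False s_1 by simp
  then show ?thesis by (simp add: inverse_unique)
qed
lemma s_sum: "(\<And>x. x \<in> A \<Longrightarrow> g x \<in> QmuN N) \<Longrightarrow> \<sigma> (sum g A) = (\<Sum>x\<in>A. \<sigma> (g x))"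
  by (induction A rule: infinite_finite_induct) (auto simp: s_0 s_add Q_sum)
lemma s_prod: "(\<And>x. x \<in> A \<Longrightarrow> g x \<in> QmuN N) \<Longrightarrow> \<sigma> (prod g A) = (\<Prod>x\<in>A. \<sigma> (g x))"
  by (induction A rule: infinite_finite_induct) (auto simp: s_1 s_mult Q_prod)

lemma gal_exp_prop:
  assumes N3: "N \<ge> 3"
  shows "\<sigma> (zetaN N) = zetaN N ^ gal_exp N \<sigma> \<and> coprime (gal_exp N \<sigma>) N"
proof -
  have zQ: "zetaN N \<in> QmuN N" using zeta_Q[OF N, of 1] by simp
  have "\<sigma> (zetaN N) ^ N = 1"
    using s_pow[OF zQ, of N] zeta_1[OF N, of N] s_1 by simp
  then obtain k0 where k0: "k0 < N" "\<sigma> (zetaN N) = zetaN N ^ k0"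
    using muN_eq[OF N] unfolding muN_def by blast
  have cop: "coprime k0 N"
  proof (rule ccontr)
    assume nc: "\<not> coprime k0 N"
    define d where "d = gcd k0 N"
    have d1: "d \<noteq> 1" using nc by (simp add: d_def coprime_iff_gcd_eq_1)
    have dpos: "d > 0" using N by (simp add: d_def)
    have ddvd: "d dvd N" "d dvd k0" by (simp_all add: d_def)
    define e where "e = N div d"
    have Ne: "N = d * e" using ddvd by (simp add: e_def)
    have epos: "e > 0" using Ne N by (cases e) auto
    have eN: "e < N" using Ne d1 dpos epos by (cases d; cases "d - 1") auto
    have "N dvd k0 * e" using ddvd Ne by (metis dvd_def mult.commute mult_dvd_mono dvd_refl)
    hence "\<sigma> (zetaN N ^ e) = \<sigma> 1"
      using s_pow[OF zQ, of e] k0 s_1 zeta_1[OF N, of "k0 * e"] by (simp add: power_mult)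
    hence "zetaN N ^ e = 1" using s_inj[OF zeta_Q[OF N] Q_1] by blast
    hence "N dvd e" using zeta_1[OF N] by blast
    thus False using epos eN by (simp add: nat_dvd_not_less)
  qed
  have k0pos: "k0 \<ge> 1" using cop N3 by (cases k0) auto
  have "gal_exp N \<sigma> = k0"
    unfolding gal_exp_def
  proof (rule the_equality)
    show "1 \<le> k0 \<and> k0 \<le> N - 1 \<and> coprime k0 N \<and> \<sigma> (zetaN N) = zetaN N ^ k0"
      using k0 k0pos cop by auto
    fix k assume "1 \<le> k \<and> k \<le> N - 1 \<and> coprime k N \<and> \<sigma> (zetaN N) = zetaN N ^ k"
    hence "k < N" "zetaN N ^ k = zetaN N ^ k0" using k0 N by auto
    thus "k = k0" using zeta_eq[OF N] k0 by simp
  qed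
  thus ?thesis using k0 cop by simp
qed

end

lemma iota_inv_mod: "N > 0 \<Longrightarrow> iota_inv N a mod N = a mod N"
  by (simp add: iota_inv_def)

lemma Fcoeff_TA_zeta:
  assumes N: "N \<ge> 1"
  shows "Fcoeff N (TA a) (XZ (zetaN N ^ m)) = inverse (zetaN N ^ (m * iota_inv N a))"
proof -
  define m0 where "m0 = (if m mod N = 0 then N else m mod N)"
  have m0: "m0 \<in> {1..N}" "m0 mod N = m mod N" using N by (auto simp: m0_def)
  have iff: "zetaN N ^ m' = zetaN N ^ m \<longleftrightarrow> m' = m0" if "m' \<in> {1..N}" for m'
  proof -
    have "zetaN N ^ m' = zetaN N ^ m \<longleftrightarrow> m' mod N = m0 mod N" using zeta_eq[OF N] m0 by simp
    also have "\<dots> \<longleftrightarrow> m' = m0" using that m0(1)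
      by (cases "m' = N"; cases "m0 = N") auto
    finally show ?thesis .
  qed
  have "Fcoeff N (TA a) (XZ (zetaN N ^ m)) =
     (\<Sum>m'\<in>{1..N}. if m' = m0 then inverse (zetaN N ^ (m0 * iota_inv N a)) else 0)"
    unfolding Fcoeff.simps by (intro sum.cong refl) (auto simp: iff)
  also have "\<dots> = inverse (zetaN N ^ (m0 * iota_inv N a))" using m0 by simp
  also have "zetaN N ^ (m0 * iota_inv N a) = zetaN N ^ (m * iota_inv N a)"
    using zeta_eq[OF N] m0(2) by (metis mod_mult_cong)
  finally show ?thesis .
qed

lemma Fcoeff_notmu: "N \<ge> 1 \<Longrightarrow> z \<notin> muN N \<Longrightarrow> Fcoeff N t (XZ z) = 0"
  by (cases t) (auto intro!: sum.neutral simp: zeta_in_mu)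

lemma pow_mod_root: "(z::complex) ^ N = 1 \<Longrightarrow> z ^ n = z ^ (n mod N)"
proof -
  assume z: "z ^ N = 1"
  have "z ^ n = z ^ (N * (n div N) + n mod N)" by simp
  also have "\<dots> = z ^ (n mod N)" by (simp only: power_add power_mult z) simp
  finally show ?thesis .
qed

context
  fixes N :: nat and \<sigma> :: "complex \<Rightarrow> complex"
  assumes N3: "N \<ge> 3" and s: "\<sigma> \<in> GalN N"
begin

private lemma N: "N \<ge> 1" using N3 by simp

private abbreviation "k \<equiv> gal_exp N \<sigma>"

private lemma kprop: "\<sigma> (zetaN N) = zetaN N ^ k" "coprime k N"
  using gal_exp_prop[OF N s N3] by auto

private lemma s_zeta: "\<sigma> (zetaN N ^ n) = zetaN N ^ (k * n)"
  using s_pow[OF N s zeta_Q[OF N, of 1]] kprop by (simp add: power_mult)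

private lemma s_Finv: "\<sigma> (inverse (zetaN N ^ n)) = inverse (zetaN N ^ (k * n))"
  using s_inverse[OF N s zeta_Q[OF N]] s_zeta by simp

lemma F3: "x \<in> Xalph N \<Longrightarrow> \<sigma> (Fcoeff N t x) = Fcoeff N t (delta k x)"
proof (cases t; cases x)
  fix a z assume x: "x \<in> Xalph N" "t = TA a" "x = XZ z"
  then obtain m where "z = zetaN N ^ m" using muN_eq[OF N] by (auto simp: Xalph_def)
  then show ?thesis using x
    by (simp del: Fcoeff.simps(4) add: Fcoeff_TA_zeta[OF N] s_Finv flip: power_mult) (simp add: mult_ac)
qed (auto simp: s_0[OF N s] s_1[OF N s])

lemma F4: "\<sigma> (Fcoeff N t x) = Fcoeff N (tdelta N k t) x"
proof (cases t; cases x)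
  fix a z assume x: "t = TA a" "x = XZ z"
  show ?thesis
  proof (cases "z \<in> muN N")
    case True
    then obtain m where "z = zetaN N ^ m" using muN_eq[OF N] by auto
    moreover have "(k * (m * iota_inv N a)) mod N = (m * iota_inv N ((iota N k * a) mod N)) mod N"
    proof -
      have "(k * (m * iota_inv N a)) mod N = (k * (m * (iota_inv N a mod N))) mod N"
        by (metis mod_mult_right_eq)
      also have "\<dots> = (k * (m * a)) mod N" using N
        by (metis iota_inv_mod mod_mult_right_eq not_one_le_zero not_gr0)
      also have "\<dots> = (m * ((iota N k * a) mod N)) mod N"
        unfolding iota_def by (metis mod_mult_left_eq mod_mult_right_eq mult.assoc mult.commute)
      also have "\<dots> = (m * (iota_inv N ((iota N k * a) mod N) mod N)) mod N"
        using N by (simp add: iota_inv_mod)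
      also have "\<dots> = (m * iota_inv N ((iota N k * a) mod N)) mod N"
        by (metis mod_mult_right_eq)
      finally show ?thesis .
    qed
    ultimately show ?thesis using x
      by (simp del: Fcoeff.simps(4) add: Fcoeff_TA_zeta[OF N] s_Finv zeta_eq[OF N])
  next
    case False
    then show ?thesis using x by (simp del: Fcoeff.simps(4) add: Fcoeff_notmu[OF N] s_0[OF N s])
  qed
qed (auto simp: s_0[OF N s] s_1[OF N s])


private lemma kinv: "\<exists>k'. (k * k') mod N = 1"
proof -
  obtain k' where "[k * k' = Suc 0] (mod N)" using cong_solve_coprime_nat kprop(2) by blast
  thus ?thesis using N3 by (auto simp: cong_def)
qed

private lemma delta_X: "x \<in> Xalph N \<Longrightarrow> delta j x \<in> Xalph N"
proof (cases x)
  case (XZ z)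
  assume "x \<in> Xalph N"
  then have "z ^ N = 1" using XZ by (auto simp: Xalph_def muN_def)
  then have "(z ^ j) ^ N = 1" by (metis power_mult mult.commute power_one)
  then show ?thesis using XZ by (simp add: Xalph_def muN_def)
qed (simp add: Xalph_def)

private lemma delta_inv: "(k * k') mod N = 1 \<Longrightarrow> x \<in> Xalph N \<Longrightarrow> delta k' (delta k x) = x \<and> delta k (delta k' x) = x"
proof (cases x)
  case (XZ z)
  assume kk: "(k * k') mod N = 1" and "x \<in> Xalph N"
  then have z: "z ^ N = 1" using XZ by (auto simp: Xalph_def muN_def)
  have "z ^ (k * k') = z" using pow_mod_root[OF z, of "k * k'"] kk by simp
  then have "z ^ (k' * k) = z" by (simp add: mult.commute)
  note this \<open>z ^ (k * k') = z\<close>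
  then show ?thesis using XZ by (simp flip: power_mult)
qed simp

private lemma tdelta_T: "t \<in> Talph N \<Longrightarrow> tdelta N j t \<in> Talph N"
  using N by (cases t) (auto simp: Talph_def)

private lemma sFmap: "f \<in> serT N \<Longrightarrow> \<sigma> (Fmap N f u) =
   (\<Sum>w\<in>{w \<in> lists (Talph N). length w = length u}. \<sigma> (f w) * (\<Prod>i<length u. \<sigma> (Fcoeff N (w ! i) (u ! i))))"
  unfolding Fmap_def
  by (subst s_sum[OF N s], force intro!: Q_mult Q_prod Fcoeff_Q[OF N] simp: serT_def)
     (intro sum.cong refl, simp add: s_mult[OF N s] s_prod[OF N s] Q_prod Fcoeff_Q[OF N] serT_def)

lemma ident1: "f \<in> serT N \<Longrightarrow> Fmap N (coeffmap \<sigma> f) = Delta N \<sigma> (Fmap N f)"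
proof
  fix v assume f: "f \<in> serT N"
  show "Fmap N (coeffmap \<sigma> f) v = Delta N \<sigma> (Fmap N f) v"
  proof (cases "v \<in> lists (Xalph N)")
    case True
    obtain k' where kk: "(k * k') mod N = 1" using kinv by blast
    define u0 where "u0 = map (delta k') v"
    have fib: "{w \<in> lists (Xalph N). map (delta k) w = v} = {u0}"
    proof -
      have a: "w = u0" if w: "w \<in> lists (Xalph N)" "map (delta k) w = v" for w
        unfolding u0_def w(2)[symmetric] using delta_inv[OF kk] w(1)
        by (induction w) auto
      have b: "u0 \<in> lists (Xalph N)" using True by (auto simp: u0_def delta_X)
      have c: "map (delta k) u0 = v" unfolding u0_def using True delta_inv[OF kk] by (induction v) auto
      show ?thesis using a b c by blast
    qed
    have "Delta N \<sigma> (Fmap N f) v = \<sigma> (Fmap N f u0)" unfolding Delta_def fib by simp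
    also have "\<dots> = Fmap N (coeffmap \<sigma> f) v"
      unfolding sFmap[OF f] unfolding Fmap_def coeffmap_def u0_def length_map
    proof (intro sum.cong refl arg_cong2[where f = "(*)"] prod.cong)
      fix w i assume i: "i \<in> {..<length v}"
      have "v ! i \<in> Xalph N" using True i by (auto simp: u0_def)
      then have "delta k (delta k' (v ! i)) = v ! i" using delta_inv[OF kk] by blast
      moreover have "delta k' (v ! i) \<in> Xalph N" using \<open>v ! i \<in> Xalph N\<close> delta_X by blast
      ultimately show "\<sigma> (Fcoeff N (w ! i) (map (delta k') v ! i)) = Fcoeff N (w ! i) (v ! i)"
        using i F3 by simp
    qed
    finally show ?thesis ..
  next
    case False
    then obtain i where i: "i < length v" "v ! i \<notin> Xalph N"
      by (metis in_listsI in_set_conv_nth)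
    then obtain z where z: "v ! i = XZ z" "z \<notin> muN N"
      by (cases "v ! i") (auto simp: Xalph_def)
    have "Fmap N (coeffmap \<sigma> f) v = 0" unfolding Fmap_def
    proof (intro sum.neutral ballI)
      fix w
      have "Fcoeff N (w ! i) (v ! i) = 0" using z Fcoeff_notmu[OF N] by simp
      then have "(\<Prod>i<length v. Fcoeff N (w ! i) (v ! i)) = 0"
        using i by (intro prod_zero) auto
      then show "coeffmap \<sigma> f w * (\<Prod>i<length v. Fcoeff N (w ! i) (v ! i)) = 0" by simp
    qed
    moreover have "{w \<in> lists (Xalph N). map (delta k) w = v} = {}"
      using False delta_X by auto
    ultimately show ?thesis unfolding Delta_def by (metis (no_types, lifting) sum.empty)
  qed
qed

lemma ident2: "f \<in> serT N \<Longrightarrow> Fmap N (tDelta N \<sigma> f) = coeffmap \<sigma> (Fmap N f)"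
proof
  fix v :: "xletter list" assume f: "f \<in> serT N"
  define W where "W = {w \<in> lists (Talph N). length w = length v}"
  define P where "P = (\<lambda>w. \<Prod>i<length v. Fcoeff N (w ! i) (v ! i))"
  have finT: "finite (Talph N)" by (simp add: Talph_def)
  have finW: "finite W" unfolding W_def
    by (rule finite_subset[OF _ finite_lists_length_eq[OF finT, of "length v"]]) auto
  have "Fmap N (tDelta N \<sigma> f) v = (\<Sum>w\<in>W. \<Sum>w'\<in>{w' \<in> W. map (tdelta N k) w' = w}. \<sigma> (f w') * P w)"
    unfolding Fmap_def tDelta_def W_def P_def sum_distrib_right
    by (intro sum.cong refl) auto
  also have "\<dots> = (\<Sum>w'\<in>W. \<Sum>w\<in>{w \<in> W. map (tdelta N k) w' = w}. \<sigma> (f w') * P w)"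
    by (rule sum.swap_restrict[OF finW finW])
  also have "\<dots> = (\<Sum>w'\<in>W. \<sigma> (f w') * P (map (tdelta N k) w'))"
  proof (intro sum.cong refl)
    fix w' assume "w' \<in> W"
    then have "{w \<in> W. map (tdelta N k) w' = w} = {map (tdelta N k) w'}"
      using tdelta_T by (auto simp: W_def)
    then show "(\<Sum>w\<in>{w \<in> W. map (tdelta N k) w' = w}. \<sigma> (f w') * P w) = \<sigma> (f w') * P (map (tdelta N k) w')"
      by simp
  qed
  also have "\<dots> = coeffmap \<sigma> (Fmap N f) v"
    unfolding coeffmap_def sFmap[OF f] unfolding W_def P_def
    by (intro sum.cong refl arg_cong2[where f = "(*)"] prod.cong) (auto simp: F4)
  finally show "Fmap N (tDelta N \<sigma> f) v = coeffmap \<sigma> (Fmap N f) v" .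
qed

end

theorem lemma3p13:
  fixes N :: nat and \<sigma> :: "complex \<Rightarrow> complex"
  assumes "N \<ge> 3" and "\<sigma> \<in> GalN N"
  shows "(\<forall>f\<in>serT N. Fmap N (coeffmap \<sigma> f) = Delta N \<sigma> (Fmap N f)) \<and>
         (\<forall>f\<in>serT N. Fmap N (tDelta N \<sigma> f) = coeffmap \<sigma> (Fmap N f))"
  using ident1[OF assms] ident2[OF assms] by blast

end
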